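(* There exist a finitely generated, residually finite group $G$ and an endomorphism $\Phi : G \to G$ such that for every $n \geq 0$, the restriction of $\Phi$ to $\Phi^n(G)$ is not injective. *)

theory Defs
  imports "HOL-Algebra.Algebra"
begin

definition finitely_generated_group :: "('a, 'b) monoid_scheme \<Rightarrow> bool" where
  "finitely_generated_group G \<longleftrightarrow>
     (\<exists>S. finite S \<and> S \<subseteq> carrier G \<and> generate G S = carrier G)"

definition residually_finite :: "('a, 'b) monoid_scheme \<Rightarrow> bool" where
  "residually_finite G \<longleftrightarrow>
     (\<forall>g \<in> carrier G. g \<noteq> \<one>\<^bsub>G\<^esub> \<longrightarrow>
        (\<exists>N. N \<lhd> G \<and> finite (rcosets\<^bsub>G\<^esub> N) \<and> g \<notin> N))"

end

theory Submission
  imports Defs "HOL-Library.Countable_Set"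
begin


definition W :: "('a,'b) monoid_scheme \<Rightarrow> (('a \<Rightarrow> bool) \<times> 'a) monoid" where
 "W L = \<lparr>carrier = {(f,g). g \<in> carrier L \<and> (\<forall>h. f h \<longrightarrow> h \<in> carrier L)},
    monoid.mult = (\<lambda>(f,g) (f',g'). (\<lambda>h. h \<in> carrier L \<and> (f h \<noteq> f' (inv\<^bsub>L\<^esub> g \<otimes>\<^bsub>L\<^esub> h)), g \<otimes>\<^bsub>L\<^esub> g')),
    one = (\<lambda>h. False, \<one>\<^bsub>L\<^esub>)\<rparr>"

lemma W_carrier: "(f,g) \<in> carrier (W L) \<longleftrightarrow> g \<in> carrier L \<and> (\<forall>h. f h \<longrightarrow> h \<in> carrier L)"
  by (simp add: W_def)
lemma W_mult: "(f,g) \<otimes>\<^bsub>W L\<^esub> (f',g') = (\<lambda>h. h \<in> carrier L \<and> (f h \<noteq> f' (inv\<^bsub>L\<^esub> g \<otimes>\<^bsub>L\<^esub> h)), g \<otimes>\<^bsub>L\<^esub> g')"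
  by (simp add: W_def)
lemma W_one: "\<one>\<^bsub>W L\<^esub> = (\<lambda>h. False, \<one>\<^bsub>L\<^esub>)"
  by (simp add: W_def)

lemma (in group) W_group: "group (W G)"
proof (rule groupI)
  fix x y assume "x \<in> carrier (W G)" "y \<in> carrier (W G)"
  then show "x \<otimes>\<^bsub>W G\<^esub> y \<in> carrier (W G)"
    by (cases x, cases y) (auto simp: W_carrier W_mult)
next
  show "\<one>\<^bsub>W G\<^esub> \<in> carrier (W G)" by (simp add: W_one W_carrier)
next
  fix x y z assume "x \<in> carrier (W G)" "y \<in> carrier (W G)" "z \<in> carrier (W G)"
  then show "x \<otimes>\<^bsub>W G\<^esub> y \<otimes>\<^bsub>W G\<^esub> z = x \<otimes>\<^bsub>W G\<^esub> (y \<otimes>\<^bsub>W G\<^esub> z)"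
    by (cases x, cases y, cases z) (auto simp: W_carrier W_mult m_assoc inv_mult_group fun_eq_iff)
next
  fix x assume "x \<in> carrier (W G)"
  then show "\<one>\<^bsub>W G\<^esub> \<otimes>\<^bsub>W G\<^esub> x = x"
    by (cases x) (auto simp: W_carrier W_mult W_one fun_eq_iff)
next
  fix x assume x: "x \<in> carrier (W G)"
  obtain f g where xe: "x = (f,g)" by (cases x)
  show "\<exists>y\<in>carrier (W G). y \<otimes>\<^bsub>W G\<^esub> x = \<one>\<^bsub>W G\<^esub>"
    apply (rule bexI[of _ "(\<lambda>h. h \<in> carrier G \<and> f (g \<otimes> h), inv g)"])
    using x by (auto simp: xe W_carrier W_mult W_one fun_eq_iff m_assoc[symmetric])
qed

lemma (in group) W_finite: "finite (carrier G) \<Longrightarrow> finite (carrier (W G))"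
proof -
  assume fin: "finite (carrier G)"
  have "carrier (W G) \<subseteq> ((\<lambda>A. \<lambda>h. h \<in> A) ` Pow (carrier G)) \<times> carrier G"
  proof
    fix x assume "x \<in> carrier (W G)"
    then obtain f g where xe: "x = (f,g)" and c: "g \<in> carrier G" "\<forall>h. f h \<longrightarrow> h \<in> carrier G"
      by (cases x) (auto simp: W_carrier)
    have "f = (\<lambda>h. h \<in> {h. f h})" by auto
    then show "x \<in> ((\<lambda>A. \<lambda>h. h \<in> A) ` Pow (carrier G)) \<times> carrier G"
      using c xe by (auto intro!: image_eqI[of _ _ "{h. f h}"])
  qed
  then show ?thesis using fin by (meson finite_Pow_iff finite_SigmaI finite_imageI finite_subset)
qed

definition Phi :: "('a,'b) monoid_scheme \<Rightarrow> 'a \<Rightarrow> 'a \<Rightarrow> ('a \<Rightarrow> bool) \<Rightarrow> ('a \<Rightarrow> bool)" where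
  "Phi L a d f = (\<lambda>h. h \<in> carrier L \<and> (f (h \<otimes>\<^bsub>L\<^esub> a) \<noteq> f (h \<otimes>\<^bsub>L\<^esub> a \<otimes>\<^bsub>L\<^esub> d)))"

definition PhiW :: "('a,'b) monoid_scheme \<Rightarrow> 'a \<Rightarrow> 'a \<Rightarrow> ('a \<Rightarrow> bool) \<times> 'a \<Rightarrow> ('a \<Rightarrow> bool) \<times> 'a" where
  "PhiW L a d x = (Phi L a d (fst x), snd x)"

lemma (in group) PhiW_hom:
  assumes a: "a \<in> carrier G" and d: "d \<in> carrier G"
  shows "PhiW G a d \<in> hom (W G) (W G)"
proof (rule homI)
  fix x assume "x \<in> carrier (W G)"
  then show "PhiW G a d x \<in> carrier (W G)"
    by (cases x) (auto simp: W_carrier PhiW_def Phi_def)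
next
  fix x y assume "x \<in> carrier (W G)" "y \<in> carrier (W G)"
  then show "PhiW G a d (x \<otimes>\<^bsub>W G\<^esub> y) = PhiW G a d x \<otimes>\<^bsub>W G\<^esub> PhiW G a d y"
    using a d by (cases x, cases y) (auto simp: W_carrier W_mult PhiW_def Phi_def fun_eq_iff m_assoc)
qed

definition Qop :: "('a,'b) monoid_scheme \<Rightarrow> 'a \<Rightarrow> ('a \<Rightarrow> bool) \<Rightarrow> ('a \<Rightarrow> bool)" where
  "Qop L d f = (\<lambda>h. h \<in> carrier L \<and> (f h \<noteq> f (h \<otimes>\<^bsub>L\<^esub> d)))"

locale lampl = group G for G (structure) +
  fixes a :: 'a and e :: "nat \<Rightarrow> 'a"
  assumes a_c: "a \<in> carrier G" and e_c: "\<And>k. e k \<in> carrier G"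
    and ae: "\<And>k. a \<otimes> e (Suc k) = e k \<otimes> a"
    and ee: "\<And>k. e k \<otimes> e k = \<one>"
    and e0c: "\<And>k. e 0 \<otimes> e k = e k \<otimes> e 0"
begin

abbreviation "PB \<equiv> Phi G a (e 0)"

lemma L1: "PB (Qop G (e (Suc k)) f) = Qop G (e k) (PB f)"
proof (rule ext)
  fix h
  show "PB (Qop G (e (Suc k)) f) h = Qop G (e k) (PB f) h"
  proof (cases "h \<in> carrier G")
    case False then show ?thesis by (simp add: Phi_def Qop_def)
  next
    case True
    note c = True a_c e_c[of k] e_c[of 0] e_c[of "Suc k"]
    have 1: "h \<otimes> e k \<otimes> a = h \<otimes> a \<otimes> e (Suc k)" using c by (simp add: m_assoc ae)
    have 2: "h \<otimes> e k \<otimes> a \<otimes> e 0 = h \<otimes> a \<otimes> e 0 \<otimes> e (Suc k)"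
      using c by (simp add: 1 m_assoc e0c[of "Suc k"])
    have 3: "h \<otimes> a \<otimes> e (Suc k) \<otimes> e 0 = h \<otimes> a \<otimes> e 0 \<otimes> e (Suc k)"
      using c by (simp add: m_assoc e0c[of "Suc k"])
    show ?thesis using c by (simp add: Phi_def Qop_def 1 2 3) argo
  qed
qed

lemma L2: "PB (Qop G (e 0) f) = (\<lambda>h. False)"
proof (rule ext)
  fix h
  have "h \<in> carrier G \<Longrightarrow> h \<otimes> a \<otimes> e 0 \<otimes> e 0 = h \<otimes> a"
    using a_c e_c[of 0] by (simp add: m_assoc ee)
  then show "PB (Qop G (e 0) f) h = False"
    using a_c e_c[of 0] by (auto simp: Phi_def Qop_def)
qed

lemma L3: "(PB ^^ n) (Qop G (e (k + n)) f) = Qop G (e k) ((PB ^^ n) f)"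
proof (induction n arbitrary: f)
  case 0 then show ?case by simp
next
  case (Suc n)
  have "(PB ^^ Suc n) (Qop G (e (k + Suc n)) f) = (PB ^^ n) (PB (Qop G (e (Suc (k + n))) f))"
    by (simp only: funpow_Suc_right comp_def add_Suc_right)
  also have "\<dots> = (PB ^^ n) (Qop G (e (k + n)) (PB f))" by (simp add: L1)
  also have "\<dots> = Qop G (e k) ((PB ^^ n) (PB f))" by (rule Suc)
  finally show ?case by (simp only: funpow_Suc_right comp_def)
qed

lemma kill: "(PB ^^ Suc n) (Qop G (e n) f) = (\<lambda>h. False)"
proof -
  have "(PB ^^ Suc n) (Qop G (e n) f) = PB ((PB ^^ n) (Qop G (e (0 + n)) f))" by simp
  also have "\<dots> = PB (Qop G (e 0) ((PB ^^ n) f))" by (simp only: L3)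
  finally show ?thesis by (simp add: L2)
qed

lemma shift: "(PB ^^ n) (Qop G (e n) f) = Qop G (e 0) ((PB ^^ n) f)"
  using L3[of n 0 f] by simp

lemma e_next: "e (Suc k) = inv a \<otimes> e k \<otimes> a"
proof -
  have "inv a \<otimes> e k \<otimes> a = inv a \<otimes> (a \<otimes> e (Suc k))"
    using a_c e_c by (simp add: m_assoc ae)
  also have "\<dots> = e (Suc k)" using a_c e_c by (simp add: m_assoc[symmetric])
  finally show ?thesis by simp
qed

lemma e_pow: "e 0 \<otimes> (a [^] n) = (a [^] n) \<otimes> e n"
proof (induction n)
  case 0 then show ?case using e_c by simp
next
  case (Suc n)
  have "e 0 \<otimes> a [^] Suc n = (e 0 \<otimes> a [^] n) \<otimes> a" using a_c e_c by (simp add: m_assoc)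
  also have "\<dots> = a [^] n \<otimes> (e n \<otimes> a)" using Suc a_c e_c by (simp add: m_assoc)
  also have "\<dots> = a [^] n \<otimes> (a \<otimes> e (Suc n))" by (simp add: ae)
  also have "\<dots> = a [^] Suc n \<otimes> e (Suc n)" using a_c e_c by (simp add: m_assoc)
  finally show ?case .
qed

lemma e_inv: "inv (e k) = e k"
  using e_c ee by (simp add: inv_char)

end

lemma (in group) W_inv0: "g \<in> carrier G \<Longrightarrow> inv\<^bsub>W G\<^esub> (\<lambda>h. False, g) = (\<lambda>h. False, inv g)"
  apply (rule group.inv_equality[OF W_group])
  by (auto simp: W_carrier W_mult W_one fun_eq_iff)

lemma (in group) W_mult0: "(\<lambda>h. False, g) \<otimes>\<^bsub>W G\<^esub> (\<lambda>h. False, g') = (\<lambda>h. False, g \<otimes> g')"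
  by (simp add: W_mult)

lemma (in group) W_conj: "g \<in> carrier G \<Longrightarrow> \<forall>h. f h \<longrightarrow> h \<in> carrier G \<Longrightarrow>
   (\<lambda>h. False, g) \<otimes>\<^bsub>W G\<^esub> (f, \<one>) \<otimes>\<^bsub>W G\<^esub> (\<lambda>h. False, inv g) = (\<lambda>h. h \<in> carrier G \<and> f (inv g \<otimes> h), \<one>)"
  by (auto simp: W_mult fun_eq_iff)

lemma (in group) W_mult1: "(f, \<one>) \<otimes>\<^bsub>W G\<^esub> (f', \<one>) = (\<lambda>h. h \<in> carrier G \<and> (f h \<noteq> f' h), \<one>)"
  by (auto simp: W_mult fun_eq_iff)

lemma (in group) PhiW_pow: "(PhiW G a d ^^ n) (f, g) = ((Phi G a d ^^ n) f, g)"
  by (induction n) (auto simp: PhiW_def)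


lemma (in group) W_conj': "g \<in> carrier G \<Longrightarrow>
   (\<lambda>h. False, inv g) \<otimes>\<^bsub>W G\<^esub> (f, \<one>) \<otimes>\<^bsub>W G\<^esub> (\<lambda>h. False, g) = (\<lambda>h. h \<in> carrier G \<and> f (g \<otimes> h), \<one>)"
  by (auto simp: W_mult fun_eq_iff)

lemma (in group) comm1: "x \<in> carrier G \<Longrightarrow> y \<in> carrier G \<Longrightarrow> (x \<otimes> y = \<one>) = (y \<otimes> x = \<one>)"
  using inv_comm by blast

context lampl
begin

lemma Y_next: "(\<lambda>h. False, inv a) \<otimes>\<^bsub>W G\<^esub> (\<lambda>h. False, e n) \<otimes>\<^bsub>W G\<^esub> (\<lambda>h. False, a) = (\<lambda>h. False, e (Suc n))"
  by (simp add: W_mult0 e_next)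

lemma xn_comp: "(\<lambda>h. h = \<one>, \<one>) \<otimes>\<^bsub>W G\<^esub> ((\<lambda>h. False, e n) \<otimes>\<^bsub>W G\<^esub> (\<lambda>h. h = \<one>, \<one>) \<otimes>\<^bsub>W G\<^esub> (\<lambda>h. False, inv (e n)))
   = (Qop G (e n) (\<lambda>h. h = \<one>), \<one>)"
proof -
  have "(\<lambda>h. False, e n) \<otimes>\<^bsub>W G\<^esub> (\<lambda>h. h = \<one>, \<one>) \<otimes>\<^bsub>W G\<^esub> (\<lambda>h. False, inv (e n))
     = (\<lambda>h. h \<in> carrier G \<and> inv (e n) \<otimes> h = \<one>, \<one>)"
    using e_c by (intro W_conj) auto
  moreover have "\<And>h. h \<in> carrier G \<Longrightarrow> (inv (e n) \<otimes> h = \<one>) = (h \<otimes> e n = \<one>)"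
    using e_c by (simp add: e_inv comm1)
  ultimately show ?thesis by (auto simp: W_mult1 Qop_def fun_eq_iff)
qed

lemma PhiW_E: "PhiW G a (e 0) (\<lambda>h. h = \<one>, \<one>) =
   ((\<lambda>h. False, inv a) \<otimes>\<^bsub>W G\<^esub> (\<lambda>h. h = \<one>, \<one>) \<otimes>\<^bsub>W G\<^esub> (\<lambda>h. False, a)) \<otimes>\<^bsub>W G\<^esub>
   ((\<lambda>h. False, inv (a \<otimes> e 0)) \<otimes>\<^bsub>W G\<^esub> (\<lambda>h. h = \<one>, \<one>) \<otimes>\<^bsub>W G\<^esub> (\<lambda>h. False, a \<otimes> e 0))"
proof -
  have ad: "a \<otimes> e 0 \<in> carrier G" using a_c e_c by simp
  have 1: "(\<lambda>h. False, inv a) \<otimes>\<^bsub>W G\<^esub> (\<lambda>h. h = \<one>, \<one>) \<otimes>\<^bsub>W G\<^esub> (\<lambda>h. False, a)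
      = (\<lambda>h. h \<in> carrier G \<and> a \<otimes> h = \<one>, \<one>)" using a_c by (rule W_conj')
  have 2: "(\<lambda>h. False, inv (a \<otimes> e 0)) \<otimes>\<^bsub>W G\<^esub> (\<lambda>h. h = \<one>, \<one>) \<otimes>\<^bsub>W G\<^esub> (\<lambda>h. False, a \<otimes> e 0)
      = (\<lambda>h. h \<in> carrier G \<and> a \<otimes> e 0 \<otimes> h = \<one>, \<one>)" using ad by (rule W_conj')
  have 3: "\<And>h. h \<in> carrier G \<Longrightarrow> (h \<otimes> a = \<one>) = (a \<otimes> h = \<one>)"
    using a_c comm1 by blast
  have 4: "\<And>h. h \<in> carrier G \<Longrightarrow> (h \<otimes> a \<otimes> e 0 = \<one>) = (a \<otimes> e 0 \<otimes> h = \<one>)"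
  proof -
    fix h assume h: "h \<in> carrier G"
    have "(h \<otimes> (a \<otimes> e 0) = \<one>) = (a \<otimes> e 0 \<otimes> h = \<one>)" using comm1[OF h ad] .
    then show "(h \<otimes> a \<otimes> e 0 = \<one>) = (a \<otimes> e 0 \<otimes> h = \<one>)" using h a_c e_c by (simp add: m_assoc)
  qed
  show ?thesis unfolding 1 2
    by (auto simp: W_mult1 PhiW_def Phi_def fun_eq_iff 3 4)
qed

end



definition rot :: "nat \<Rightarrow> nat \<Rightarrow> nat" where
  "rot m x = (if 1 \<le> x \<and> x \<le> 2*m then (if x = 1 then m else if x = m+1 then 2*m else x - 1) else x)"
definition rotf :: "nat \<Rightarrow> nat \<Rightarrow> nat" where
  "rotf m x = (if 1 \<le> x \<and> x \<le> 2*m then (if x = m then 1 else if x = 2*m then m+1 else x + 1) else x)"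
definition sw :: "nat \<Rightarrow> nat \<Rightarrow> nat \<Rightarrow> nat" where
  "sw m k = Transposition.transpose (k mod m + 1) (k mod m + 1 + m)"

lemma rot_rotf: "rot m (rotf m x) = x"
proof (cases "1 \<le> x \<and> x \<le> 2*m")
  case False then have "rotf m x = x" by (simp only: rotf_def if_not_P[OF False] if_False)
  then show ?thesis using False by (simp only: rot_def if_not_P[OF False] if_False)
next
  case True
  consider "x = m" | "x = 2*m" "x \<noteq> m" | "x \<noteq> m" "x \<noteq> 2*m" by blast
  then show ?thesis
  proof cases
    case 1 then have "rotf m x = 1" using True by (simp add: rotf_def)
    then show ?thesis using 1 True by (simp add: rot_def)
  next
    case 2 then have "rotf m x = m + 1" using True by (simp add: rotf_def)
    then show ?thesis using 2 True by (simp add: rot_def)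
  next
    case 3 then have "rotf m x = x + 1" using True by (simp add: rotf_def)
    then show ?thesis using 3 True by (simp add: rot_def)
  qed
qed
lemma rotf_rot: "rotf m (rot m x) = x"
proof (cases "1 \<le> x \<and> x \<le> 2*m")
  case False then have "rot m x = x" by (simp only: rot_def if_not_P[OF False] if_False)
  then show ?thesis using False by (simp only: rotf_def if_not_P[OF False] if_False)
next
  case True
  consider "x = 1" | "x = m + 1" "x \<noteq> 1" | "x \<noteq> 1" "x \<noteq> m + 1" by blast
  then show ?thesis
  proof cases
    case 1 then have "rot m x = m" using True by (simp add: rot_def)
    then show ?thesis using 1 True by (simp add: rotf_def)
  next
    case 2 then have "rot m x = 2*m" using True by (simp add: rot_def)
    then show ?thesis using 2 True by (simp add: rotf_def)
  next
    case 3 then have r: "rot m x = x - 1" using True by (simp add: rot_def)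
    have "1 \<le> x - 1" "x - 1 \<le> 2*m" "x - 1 \<noteq> m" "x - 1 \<noteq> 2*m" using 3 True by auto
    then show ?thesis using r by (simp add: rotf_def)
  qed
qed
lemma rot_permutes: "rot m permutes {1..2*m}"
  unfolding permutes_def
proof (intro conjI allI impI)
  fix x assume "x \<notin> {1..2*m}" then show "rot m x = x" by (auto simp: rot_def)
next
  fix y show "\<exists>!x. rot m x = y"
    by (rule ex1I[of _ "rotf m y"]) (auto simp: rot_rotf, metis rotf_rot)
qed

lemma sw_permutes: "sw m k permutes {1..2*m}"
proof (cases "m = 0")
  case True then show ?thesis by (simp add: sw_def)
next
  case False
  then have "k mod m < m" by simp
  then show ?thesis unfolding sw_def by (intro permutes_swap_id) auto
qed

lemma comp_transpose_gen:
  assumes "inj f" "f q = p" "f q' = p'"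
  shows "f \<circ> Transposition.transpose q q' = Transposition.transpose p p' \<circ> f"
proof (rule ext)
  fix x
  show "(f \<circ> Transposition.transpose q q') x = (Transposition.transpose p p' \<circ> f) x"
  proof (cases "x = q \<or> x = q'")
    case True then show ?thesis using assms by (auto simp: transpose_def)
  next
    case False
    then have "f x \<noteq> p" "f x \<noteq> p'" using assms by (metis injD)+
    then show ?thesis using False by (simp add: transpose_def)
  qed
qed

lemma rot_sw: "rot m \<circ> sw m (Suc k) = sw m k \<circ> rot m"
proof (cases "m = 0")
  case True then show ?thesis by (simp add: sw_def rot_def fun_eq_iff)
next
  case False
  have inj: "inj (rot m)" using rot_permutes permutes_inj by blast
  have km: "k mod m < m" using False by simp
  have 1: "rot m (Suc k mod m + 1) = k mod m + 1"
  proof (cases "Suc (k mod m) = m")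
    case True
    then have "Suc k mod m = 0" by (simp add: mod_Suc)
    then show ?thesis using True False by (simp add: rot_def)
  next
    case f2: False
    then have "Suc k mod m = Suc (k mod m)" by (simp add: mod_Suc)
    then show ?thesis using f2 km by (simp add: rot_def)
  qed
  have 2: "rot m (Suc k mod m + 1 + m) = k mod m + 1 + m"
  proof (cases "Suc (k mod m) = m")
    case True
    then have "Suc k mod m = 0" by (simp add: mod_Suc)
    then show ?thesis using True False by (simp add: rot_def)
  next
    case f2: False
    then have "Suc k mod m = Suc (k mod m)" by (simp add: mod_Suc)
    then show ?thesis using f2 km by (simp add: rot_def)
  qed
  show ?thesis unfolding sw_def by (rule comp_transpose_gen[OF inj 1 2])
qed

lemma sw_sw: "sw m k \<circ> sw m k = id"
  by (simp add: sw_def)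

lemma sw_comm_aux: "(k::nat) < m \<Longrightarrow> k \<noteq> 0 \<Longrightarrow> Transposition.transpose 1 (1+m) \<circ> Transposition.transpose (k+1) (k+1+m) = Transposition.transpose (k+1) (k+1+m) \<circ> Transposition.transpose 1 (1+m)"
  by (rule ext) (simp add: transpose_def)

lemma sw_comm: "sw m 0 \<circ> sw m k = sw m k \<circ> sw m 0"
proof (cases "m = 0")
  case True then show ?thesis by (simp add: sw_def)
next
  case False
  then have km: "k mod m < m" by simp
  show ?thesis
  proof (cases "k mod m = 0")
    case True then show ?thesis by (simp add: sw_def)
  next
    case f2: False
    show ?thesis using sw_comm_aux[OF km f2] by (simp add: sw_def)
  qed
qed

lemma lampl_sym: "lampl (sym_group (2*m)) (rot m) (sw m)"
  unfolding lampl_def lampl_axioms_def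
  using rot_permutes[of m] sw_permutes[of m]
  by (simp add: sym_group_is_group sym_group_carrier sym_group_mult sym_group_one
      rot_sw sw_sw sw_comm)



definition PP :: "nat \<Rightarrow> nat set \<Rightarrow> nat \<Rightarrow> (nat \<Rightarrow> nat) \<Rightarrow> bool" where
 "PP m J i y = ((y (i+1) = i+1 \<and> y (i+1+m) = i+1+m) \<or> (i \<in> J \<and> y (i+1) = i+1+m \<and> y (i+1+m) = i+1))"
definition SpP :: "nat \<Rightarrow> nat set \<Rightarrow> (nat \<Rightarrow> nat) \<Rightarrow> bool" where
 "SpP m J y = (\<forall>i<m. PP m J i y)"

lemma SpP_split: "n < m \<Longrightarrow> SpP m K w = ((\<forall>i<m. i \<noteq> n \<longrightarrow> PP m K i w) \<and> PP m K n w)"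
  unfolding SpP_def by blast

lemma K_lemma:
  assumes nm: "n < m" and nJ: "n \<notin> J"
  shows "SpP m (insert n J) y = (SpP m J y \<noteq> SpP m J (y \<circ> Transposition.transpose (n+1) (n+1+m)))"
proof -
  let ?z = "y \<circ> Transposition.transpose (n+1) (n+1+m)"
  have same: "PP m J i ?z = PP m (insert n J) i y" if "i < m" "i \<noteq> n" for i
  proof -
    have "?z (i+1) = y (i+1)" "?z (i+1+m) = y (i+1+m)" using that nm by (auto simp: transpose_def)
    then show ?thesis using that by (simp add: PP_def)
  qed
  have same2: "PP m J i y = PP m (insert n J) i y" if "i \<noteq> n" for i
    using that by (simp add: PP_def)
  have zn: "PP m J n ?z = (y (n+1+m) = n+1 \<and> y (n+1) = n+1+m)"
    using nJ nm by (simp add: PP_def transpose_def)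
  have yn: "PP m J n y = (y (n+1) = n+1 \<and> y (n+1+m) = n+1+m)"
    using nJ by (simp add: PP_def)
  have yin: "PP m (insert n J) n y = ((y (n+1) = n+1 \<and> y (n+1+m) = n+1+m) \<or> (y (n+1) = n+1+m \<and> y (n+1+m) = n+1))"
    by (simp add: PP_def)
  have ex: "\<not> ((y (n+1) = n+1 \<and> y (n+1+m) = n+1+m) \<and> (y (n+1) = n+1+m \<and> y (n+1+m) = n+1))"
    using nm by auto
  have R1: "(\<forall>i<m. i \<noteq> n \<longrightarrow> PP m J i ?z) = (\<forall>i<m. i \<noteq> n \<longrightarrow> PP m (insert n J) i y)"
    using same by auto
  have R2: "(\<forall>i<m. i \<noteq> n \<longrightarrow> PP m J i y) = (\<forall>i<m. i \<noteq> n \<longrightarrow> PP m (insert n J) i y)"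
    using same2 by auto
  show ?thesis
    unfolding SpP_split[OF nm, of "insert n J"] SpP_split[OF nm, of J] R1 R2 zn yn yin
    using ex by blast
qed

lemma SpP_id: "SpP m J id"
  by (simp add: SpP_def PP_def)

lemma SpP_empty:
  assumes "y permutes {1..2*m}" "SpP m {} y" shows "y = id"
proof (rule ext)
  fix x
  show "y x = id x"
  proof (cases "1 \<le> x \<and> x \<le> 2*m")
    case False then show ?thesis using assms(1) by (simp add: permutes_def)
  next
    case True
    show ?thesis
    proof (cases "x \<le> m")
      case True
      then have "x - 1 < m" "x - 1 + 1 = x" using \<open>1 \<le> x \<and> x \<le> 2*m\<close> by auto
      then show ?thesis using assms(2) unfolding SpP_def PP_def by (metis empty_iff id_apply)
    next
      case False
      then have "x - 1 - m < m" "x - 1 - m + 1 + m = x" using \<open>1 \<le> x \<and> x \<le> 2*m\<close> by auto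
      then show ?thesis using assms(2) unfolding SpP_def PP_def by (metis empty_iff id_apply)
    qed
  qed
qed

lemma sw_n: "n < m \<Longrightarrow> sw m n = Transposition.transpose (n+1) (n+1+m)"
  by (simp add: sw_def)

definition Xs :: "nat \<Rightarrow> nat \<Rightarrow> (nat \<Rightarrow> nat) \<Rightarrow> bool" where
  "Xs m k h = (h \<in> carrier (sym_group (2*m)) \<and> SpP m {0..<k} (h \<otimes>\<^bsub>sym_group (2*m)\<^esub> (rot m [^]\<^bsub>sym_group (2*m)\<^esub> k)))"

lemma nontriv:
  assumes nm: "n < m"
  shows "\<exists>h. Qop (sym_group (2*m)) (sw m 0) ((Phi (sym_group (2*m)) (rot m) (sw m 0) ^^ n) (\<lambda>h. h = id)) h"
proof -
  interpret lampl "sym_group (2*m)" "rot m" "sw m" by (rule lampl_sym)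
  let ?G = "sym_group (2*m)"
  let ?X = "Xs m"
  have Xk: "(PB ^^ k) (\<lambda>h. h = id) = ?X k" if "k \<le> m" for k
    using that
  proof (induction k)
    case 0
    show ?case
    proof (rule ext)
      fix h
      show "(PB ^^ 0) (\<lambda>h. h = id) h = ?X 0 h"
        using SpP_empty[of h m] SpP_id[of m "{}"]
        by (auto simp: Xs_def sym_group_carrier sym_group_one sym_group_mult permutes_id)
    qed
  next
    case (Suc k)
    then have km: "k < m" by simp
    have IH: "(PB ^^ k) (\<lambda>h. h = id) = ?X k" using Suc.IH Suc.prems Suc_leD by blast
    show ?case
    proof (rule ext)
      fix h
      show "(PB ^^ Suc k) (\<lambda>h. h = id) h = ?X (Suc k) h"
      proof (cases "h \<in> carrier (sym_group (2*m))")
        case False then show ?thesis by (simp add: IH Phi_def Xs_def)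
      next
        case True
        note c = True a_c e_c
        have comm: "rot m \<otimes>\<^bsub>sym_group (2*m)\<^esub> (rot m [^]\<^bsub>sym_group (2*m)\<^esub> k) = (rot m [^]\<^bsub>sym_group (2*m)\<^esub> k) \<otimes>\<^bsub>sym_group (2*m)\<^esub> rot m"
          using a_c by (metis nat_pow_Suc nat_pow_Suc2)
        have comm2: "rot m \<otimes>\<^bsub>sym_group (2*m)\<^esub> ((rot m [^]\<^bsub>sym_group (2*m)\<^esub> k) \<otimes>\<^bsub>sym_group (2*m)\<^esub> x) = (rot m [^]\<^bsub>sym_group (2*m)\<^esub> k) \<otimes>\<^bsub>sym_group (2*m)\<^esub> (rot m \<otimes>\<^bsub>sym_group (2*m)\<^esub> x)"
          if "x \<in> carrier (sym_group (2*m))" for x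
          using a_c that comm by (metis m_assoc nat_pow_closed)
        let ?y = "h \<otimes>\<^bsub>sym_group (2*m)\<^esub> (rot m [^]\<^bsub>sym_group (2*m)\<^esub> Suc k)"
        have yc: "?y \<in> carrier (sym_group (2*m))" using c by simp
        have 1: "h \<otimes>\<^bsub>sym_group (2*m)\<^esub> rot m \<otimes>\<^bsub>sym_group (2*m)\<^esub> (rot m [^]\<^bsub>sym_group (2*m)\<^esub> k) = ?y"
          using c by (simp add: m_assoc nat_pow_Suc2 comm comm2 del: nat_pow_Suc)
        have 2: "h \<otimes>\<^bsub>sym_group (2*m)\<^esub> rot m \<otimes>\<^bsub>sym_group (2*m)\<^esub> sw m 0 \<otimes>\<^bsub>sym_group (2*m)\<^esub> (rot m [^]\<^bsub>sym_group (2*m)\<^esub> k) = ?y \<otimes>\<^bsub>sym_group (2*m)\<^esub> sw m k"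
        proof -
          have "h \<otimes>\<^bsub>sym_group (2*m)\<^esub> rot m \<otimes>\<^bsub>sym_group (2*m)\<^esub> sw m 0 \<otimes>\<^bsub>sym_group (2*m)\<^esub> (rot m [^]\<^bsub>sym_group (2*m)\<^esub> k)
              = h \<otimes>\<^bsub>sym_group (2*m)\<^esub> rot m \<otimes>\<^bsub>sym_group (2*m)\<^esub> (sw m 0 \<otimes>\<^bsub>sym_group (2*m)\<^esub> (rot m [^]\<^bsub>sym_group (2*m)\<^esub> k))"
            using c by (simp add: m_assoc)
          also have "\<dots> = h \<otimes>\<^bsub>sym_group (2*m)\<^esub> rot m \<otimes>\<^bsub>sym_group (2*m)\<^esub> ((rot m [^]\<^bsub>sym_group (2*m)\<^esub> k) \<otimes>\<^bsub>sym_group (2*m)\<^esub> sw m k)"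
            by (simp add: e_pow)
          also have "\<dots> = ?y \<otimes>\<^bsub>sym_group (2*m)\<^esub> sw m k"
            using c by (simp add: m_assoc nat_pow_Suc2 comm comm2 del: nat_pow_Suc)
          finally show ?thesis .
        qed
        have hc2: "h \<otimes>\<^bsub>sym_group (2*m)\<^esub> rot m \<in> carrier (sym_group (2*m))" "h \<otimes>\<^bsub>sym_group (2*m)\<^esub> rot m \<otimes>\<^bsub>sym_group (2*m)\<^esub> sw m 0 \<in> carrier (sym_group (2*m))"
          using c by auto
        have "(PB ^^ Suc k) (\<lambda>h. h = id) h = PB (?X k) h" by (simp add: IH)
        also have "\<dots> = (SpP m {0..<k} ?y \<noteq> SpP m {0..<k} (?y \<otimes>\<^bsub>sym_group (2*m)\<^esub> sw m k))"
          using True hc2 by (simp add: Phi_def Xs_def 1 2)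
        also have "\<dots> = SpP m {0..<Suc k} ?y"
        proof -
          have "{0..<Suc k} = insert k {0..<k}" by auto
          then show ?thesis using K_lemma[OF km, of "{0..<k}" ?y] km
            by (simp add: sym_group_mult sw_n)
        qed
        also have "\<dots> = ?X (Suc k) h" using True by (simp add: Xs_def)
        finally show ?thesis .
      qed
    qed
  qed
  let ?h = "inv\<^bsub>sym_group (2*m)\<^esub> (rot m [^]\<^bsub>sym_group (2*m)\<^esub> n)"
  have hc: "?h \<in> carrier (sym_group (2*m))" using a_c by (meson inv_closed nat_pow_closed)
  have hd: "?h \<otimes>\<^bsub>sym_group (2*m)\<^esub> sw m 0 \<in> carrier (sym_group (2*m))" using hc e_c by (meson m_closed)
  have A1: "?h \<otimes>\<^bsub>sym_group (2*m)\<^esub> (rot m [^]\<^bsub>sym_group (2*m)\<^esub> n) = id"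
    using a_c by (metis l_inv nat_pow_closed sym_group_one)
  have A2: "?h \<otimes>\<^bsub>sym_group (2*m)\<^esub> sw m 0 \<otimes>\<^bsub>sym_group (2*m)\<^esub> (rot m [^]\<^bsub>sym_group (2*m)\<^esub> n) = sw m n"
  proof -
    have "?h \<otimes>\<^bsub>sym_group (2*m)\<^esub> sw m 0 \<otimes>\<^bsub>sym_group (2*m)\<^esub> (rot m [^]\<^bsub>sym_group (2*m)\<^esub> n) = ?h \<otimes>\<^bsub>sym_group (2*m)\<^esub> ((rot m [^]\<^bsub>sym_group (2*m)\<^esub> n) \<otimes>\<^bsub>sym_group (2*m)\<^esub> sw m n)"
      using hc a_c e_c by (simp add: m_assoc e_pow del: sym_group_inv_equality)
    also have "\<dots> = sw m n" using a_c e_c by (simp add: m_assoc[symmetric] del: sym_group_inv_equality)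
    finally show ?thesis .
  qed
  have "\<not> PP m {0..<n} n (sw m n)" using nm by (simp add: PP_def sw_n)
  then have notin: "\<not> SpP m {0..<n} (sw m n)"
    using nm unfolding SpP_def by blast
  have "Qop (sym_group (2*m)) (sw m 0) (?X n) ?h"
    using hc hd A1 A2 notin SpP_id[of m "{0..<n}"] by (simp add: Qop_def Xs_def)
  then show ?thesis using Xk[of n] nm by auto
qed



lemma rf_crit:
  fixes H :: "('a, 'b) monoid_scheme" and Kt :: "('c, 'd) monoid_scheme itself"
  assumes gH: "group H"
    and ex: "\<And>g. g \<in> carrier H \<Longrightarrow> g \<noteq> \<one>\<^bsub>H\<^esub> \<Longrightarrow>
       \<exists>(K :: ('c, 'd) monoid_scheme) \<psi>. group K \<and> finite (carrier K) \<and> \<psi> \<in> hom H K \<and> \<psi> g \<noteq> \<one>\<^bsub>K\<^esub>"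
  shows "residually_finite H"
  unfolding residually_finite_def
proof (intro ballI impI)
  fix g assume g: "g \<in> carrier H" "g \<noteq> \<one>\<^bsub>H\<^esub>"
  obtain K :: "('c, 'd) monoid_scheme" and \<psi> where K: "group K" "finite (carrier K)" "\<psi> \<in> hom H K" "\<psi> g \<noteq> \<one>\<^bsub>K\<^esub>"
    using ex[OF g] by blast
  interpret gh: group_hom H K \<psi>
    using K gH by (simp add: group_hom_def group_hom_axioms_def)
  let ?N = "kernel H K \<psi>"
  have "?N \<lhd> H" by (rule gh.normal_kernel)
  moreover have "finite (rcosets\<^bsub>H\<^esub> ?N)"
  proof -
    have inj: "inj_on (\<lambda>Z. the_elem (\<psi> ` Z)) (carrier (H Mod ?N))" by (rule gh.FactGroup_inj_on)
    have sub: "(\<lambda>Z. the_elem (\<psi> ` Z)) ` carrier (H Mod ?N) \<subseteq> carrier K"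
      using gh.FactGroup_the_elem_mem by blast
    have "finite (carrier (H Mod ?N))"
      using finite_imageD[OF finite_subset[OF sub K(2)] inj] .
    then show ?thesis by (simp add: FactGroup_def)
  qed
  moreover have "g \<notin> ?N" using K(4) by (simp add: kernel_def)
  ultimately show "\<exists>N. N \<lhd> H \<and> finite (rcosets\<^bsub>H\<^esub> N) \<and> g \<notin> N" by blast
qed

definition evalw :: "('a, 'b) monoid_scheme \<Rightarrow> 'a list \<Rightarrow> 'a" where
  "evalw P ws = foldr (\<lambda>x acc. x \<otimes>\<^bsub>P\<^esub> acc) ws \<one>\<^bsub>P\<^esub>"

lemma (in group) evalw_append:
  "set w1 \<subseteq> carrier G \<Longrightarrow> set w2 \<subseteq> carrier G \<Longrightarrow> evalw G (w1 @ w2) = evalw G w1 \<otimes> evalw G w2"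
proof (induction w1)
  case Nil
  have "evalw G w2 \<in> carrier G" using Nil(2) unfolding evalw_def by (induction w2) auto
  then show ?case by (simp add: evalw_def)
next
  case (Cons x w1)
  have c1: "evalw G w1 \<in> carrier G" using Cons(2) unfolding evalw_def by (induction w1) auto
  have c2: "evalw G w2 \<in> carrier G" using Cons(3) unfolding evalw_def by (induction w2) auto
  show ?case using Cons c1 c2 by (simp add: evalw_def m_assoc)
qed

lemma (in group) countable_generate:
  assumes S: "S \<subseteq> carrier G" "countable S"
  shows "countable (generate G S)"
proof -
  let ?T = "S \<union> m_inv G ` S"
  have T: "?T \<subseteq> carrier G" using S by auto
  have "generate G S \<subseteq> evalw G ` lists ?T"
  proof
    fix x assume "x \<in> generate G S"
    then show "x \<in> evalw G ` lists ?T"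
    proof (induction rule: generate.induct)
      case one then show ?case by (rule image_eqI[of _ _ "[]"]) (auto simp: evalw_def)
    next
      case (incl h) then show ?case using S by (intro image_eqI[of _ _ "[h]"]) (auto simp: evalw_def)
    next
      case (inv h) then show ?case using S by (intro image_eqI[of _ _ "[inv h]"]) (auto simp: evalw_def)
    next
      case (eng h1 h2)
      then obtain w1 w2 where w: "w1 \<in> lists ?T" "w2 \<in> lists ?T" "h1 = evalw G w1" "h2 = evalw G w2" by auto
      have "set w1 \<subseteq> carrier G" "set w2 \<subseteq> carrier G" using w T by auto
      then have "h1 \<otimes> h2 = evalw G (w1 @ w2)" using w by (simp add: evalw_append)
      then show ?case using w by auto
    qed
  qed
  moreover have "countable (lists ?T)" using S by auto
  ultimately show ?thesis by (meson countable_image countable_subset)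
qed



abbreviation "Gm m \<equiv> sym_group (2*m)"
abbreviation "Wm m \<equiv> W (Gm m)"
definition "PG = product_group UNIV Wm"
definition "PhiP p = (\<lambda>m. PhiW (Gm m) (rot m) (sw m 0) (p m))"
definition "Ag = (\<lambda>m. ((\<lambda>h. False), rot m))"
definition "Dg = (\<lambda>m. ((\<lambda>h. False), sw m 0))"
definition "Eg = (\<lambda>m. ((\<lambda>h. h = \<one>\<^bsub>Gm m\<^esub>), \<one>\<^bsub>Gm m\<^esub>))"
definition "Yg n = (\<lambda>m. ((\<lambda>h. False), sw m n))"
definition "Sg = {Ag, Dg, Eg}"
definition "CG = generate PG Sg"
definition "xg n = Eg \<otimes>\<^bsub>PG\<^esub> (Yg n \<otimes>\<^bsub>PG\<^esub> Eg \<otimes>\<^bsub>PG\<^esub> inv\<^bsub>PG\<^esub> (Yg n))"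

lemma grpW: "group (Wm m)"
  by (rule group.W_group[OF sym_group_is_group])

lemma grpP: "group PG"
  unfolding PG_def by (rule product_group) (simp add: grpW)

lemma carrierP: "p \<in> carrier PG \<longleftrightarrow> (\<forall>m. p m \<in> carrier (Wm m))"
  by (simp add: PG_def PiE_iff)

lemma multP: "(p \<otimes>\<^bsub>PG\<^esub> q) m = p m \<otimes>\<^bsub>Wm m\<^esub> q m"
  by (simp add: PG_def)

lemma invP: "p \<in> carrier PG \<Longrightarrow> (inv\<^bsub>PG\<^esub> p) m = inv\<^bsub>Wm m\<^esub> (p m)"
  unfolding PG_def by (subst inv_product_group) (auto simp: grpW PiE_iff)

lemma oneP: "\<one>\<^bsub>PG\<^esub> = (\<lambda>m. \<one>\<^bsub>Wm m\<^esub>)"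
  by (simp add: PG_def restrict_UNIV)

lemma a_in: "rot m \<in> carrier (Gm m)" using lampl.a_c[OF lampl_sym] .
lemma e_in: "sw m k \<in> carrier (Gm m)" using lampl.e_c[OF lampl_sym] .

lemma zero_in: "g \<in> carrier (Gm m) \<Longrightarrow> (\<lambda>h. False, g) \<in> carrier (Wm m)"
  by (simp add: W_carrier)

lemma E_in: "(\<lambda>h. h = \<one>\<^bsub>Gm m\<^esub>, \<one>\<^bsub>Gm m\<^esub>) \<in> carrier (Wm m)"
  by (simp add: W_carrier sym_group_is_group group.is_monoid monoid.one_closed)

lemma gens_in: "Ag \<in> carrier PG" "Dg \<in> carrier PG" "Eg \<in> carrier PG" "Yg n \<in> carrier PG"
  by (auto simp: carrierP Ag_def Dg_def Eg_def Yg_def zero_in a_in e_in E_in)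

lemma S_sub: "Sg \<subseteq> carrier PG" using gens_in by (auto simp: Sg_def)

lemma subgrpC: "subgroup CG PG"
  unfolding CG_def by (rule group.generate_is_subgroup[OF grpP S_sub])

lemma PhiP_hom: "PhiP \<in> hom PG PG"
proof (rule homI)
  fix p assume "p \<in> carrier PG"
  then show "PhiP p \<in> carrier PG"
    using group.PhiW_hom[OF sym_group_is_group a_in e_in]
    by (auto simp: carrierP PhiP_def hom_def)
next
  fix p q assume "p \<in> carrier PG" "q \<in> carrier PG"
  then show "PhiP (p \<otimes>\<^bsub>PG\<^esub> q) = PhiP p \<otimes>\<^bsub>PG\<^esub> PhiP q"
    using group.PhiW_hom[OF sym_group_is_group a_in e_in]
    by (auto simp: carrierP PhiP_def multP fun_eq_iff hom_def)
qed

lemma Yg_in: "Yg n \<in> CG"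
proof (induction n)
  case 0 then show ?case by (simp add: CG_def Sg_def Yg_def Dg_def generate.incl)
next
  case (Suc n)
  have A: "Ag \<in> CG" by (simp add: CG_def Sg_def generate.incl)
  have "inv\<^bsub>PG\<^esub> Ag \<otimes>\<^bsub>PG\<^esub> Yg n \<otimes>\<^bsub>PG\<^esub> Ag \<in> CG"
    using A Suc subgrpC by (meson subgroup.m_closed subgroup.m_inv_closed)
  moreover have "inv\<^bsub>PG\<^esub> Ag \<otimes>\<^bsub>PG\<^esub> Yg n \<otimes>\<^bsub>PG\<^esub> Ag = Yg (Suc n)"
  proof (rule ext)
    fix m
    show "(inv\<^bsub>PG\<^esub> Ag \<otimes>\<^bsub>PG\<^esub> Yg n \<otimes>\<^bsub>PG\<^esub> Ag) m = Yg (Suc n) m"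
      using lampl.Y_next[OF lampl_sym[of m], of n]
      by (simp only: multP invP[OF gens_in(1)]) (simp add: Ag_def Yg_def group.W_inv0[OF sym_group_is_group] a_in
          del: sym_group_inv_equality)
  qed
  ultimately show ?case by simp
qed

lemma xg_in: "xg n \<in> CG"
proof -
  have E: "Eg \<in> CG" by (simp add: CG_def Sg_def generate.incl)
  show ?thesis unfolding xg_def using E Yg_in subgrpC
    by (meson subgroup.m_closed subgroup.m_inv_closed)
qed

lemma xg_comp: "xg n m = (Qop (Gm m) (sw m n) (\<lambda>h. h = \<one>\<^bsub>Gm m\<^esub>), \<one>\<^bsub>Gm m\<^esub>)"
  using lampl.xn_comp[OF lampl_sym[of m], of n]
  by (simp only: xg_def multP invP[OF gens_in(4)]) (simp add: Eg_def Yg_def group.W_inv0[OF sym_group_is_group] e_in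
      del: sym_group_inv_equality)

lemma PhiP_Eg: "PhiP Eg \<in> CG"
proof -
  have A: "Ag \<in> CG" and D: "Dg \<in> CG" and E: "Eg \<in> CG" by (simp_all add: CG_def Sg_def generate.incl)
  have "(inv\<^bsub>PG\<^esub> Ag \<otimes>\<^bsub>PG\<^esub> Eg \<otimes>\<^bsub>PG\<^esub> Ag) \<otimes>\<^bsub>PG\<^esub> (inv\<^bsub>PG\<^esub> (Ag \<otimes>\<^bsub>PG\<^esub> Dg) \<otimes>\<^bsub>PG\<^esub> Eg \<otimes>\<^bsub>PG\<^esub> (Ag \<otimes>\<^bsub>PG\<^esub> Dg)) \<in> CG"
    using A D E subgrpC by (meson subgroup.m_closed subgroup.m_inv_closed)
  moreover have "(inv\<^bsub>PG\<^esub> Ag \<otimes>\<^bsub>PG\<^esub> Eg \<otimes>\<^bsub>PG\<^esub> Ag) \<otimes>\<^bsub>PG\<^esub> (inv\<^bsub>PG\<^esub> (Ag \<otimes>\<^bsub>PG\<^esub> Dg) \<otimes>\<^bsub>PG\<^esub> Eg \<otimes>\<^bsub>PG\<^esub> (Ag \<otimes>\<^bsub>PG\<^esub> Dg)) = PhiP Eg"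
  proof (rule ext)
    fix m
    have AD: "Ag \<otimes>\<^bsub>PG\<^esub> Dg \<in> carrier PG" using gens_in grpP by (simp add: group.is_monoid monoid.m_closed)
    have ADm: "(Ag \<otimes>\<^bsub>PG\<^esub> Dg) m = (\<lambda>h. False, rot m \<otimes>\<^bsub>Gm m\<^esub> sw m 0)"
      by (simp add: multP Ag_def Dg_def group.W_mult0[OF sym_group_is_group])
    show "((inv\<^bsub>PG\<^esub> Ag \<otimes>\<^bsub>PG\<^esub> Eg \<otimes>\<^bsub>PG\<^esub> Ag) \<otimes>\<^bsub>PG\<^esub> (inv\<^bsub>PG\<^esub> (Ag \<otimes>\<^bsub>PG\<^esub> Dg) \<otimes>\<^bsub>PG\<^esub> Eg \<otimes>\<^bsub>PG\<^esub> (Ag \<otimes>\<^bsub>PG\<^esub> Dg))) m = PhiP Eg m"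
      using lampl.PhiW_E[OF lampl_sym[of m]] a_in e_in
        group.W_inv0[OF sym_group_is_group monoid.m_closed[OF group.is_monoid[OF sym_group_is_group] a_in e_in]]
      by (simp only: multP invP[OF gens_in(1)] invP[OF AD] ADm) (simp add: Ag_def Dg_def Eg_def PhiP_def group.W_mult0[OF sym_group_is_group] group.W_inv0[OF sym_group_is_group]
          del: sym_group_inv_equality)
  qed
  ultimately show ?thesis by simp
qed

lemma PhiP_fix: "PhiP Ag = Ag" "PhiP Dg = Dg"
  by (auto simp: PhiP_def Ag_def Dg_def PhiW_def Phi_def fun_eq_iff)

lemma PhiP_C: "p \<in> CG \<Longrightarrow> PhiP p \<in> CG"
proof -
  assume "p \<in> CG"
  then show "PhiP p \<in> CG" unfolding CG_def
  proof (induction rule: generate.induct)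
    case one
    have "PhiP \<one>\<^bsub>PG\<^esub> = \<one>\<^bsub>PG\<^esub>" using PhiP_hom grpP by (simp add: hom_one)
    then show ?case by (simp add: generate.one)
  next
    case (incl h)
    then show ?case using PhiP_fix PhiP_Eg by (auto simp: Sg_def CG_def generate.incl)
  next
    case (inv h)
    have hc: "h \<in> carrier PG" using inv S_sub by auto
    have "PhiP (inv\<^bsub>PG\<^esub> h) = inv\<^bsub>PG\<^esub> (PhiP h)"
      using PhiP_hom grpP hc by (simp add: group_hom.hom_inv group_hom_def group_hom_axioms_def)
    moreover have "PhiP h \<in> generate PG Sg" using inv PhiP_fix PhiP_Eg by (auto simp: Sg_def CG_def generate.incl)
    ultimately show ?case using group.generate_m_inv_closed[OF grpP S_sub] by simp
  next
    case (eng h1 h2)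
    have "h1 \<in> carrier PG" "h2 \<in> carrier PG" using eng(1,2) group.generate_in_carrier[OF grpP S_sub] by auto
    then have "PhiP (h1 \<otimes>\<^bsub>PG\<^esub> h2) = PhiP h1 \<otimes>\<^bsub>PG\<^esub> PhiP h2" using PhiP_hom by (simp add: hom_mult)
    then show ?case using eng(3,4) by (simp add: generate.eng)
  qed
qed

lemma PhiP_pow: "(PhiP ^^ n) p = (\<lambda>m. (PhiW (Gm m) (rot m) (sw m 0) ^^ n) (p m))"
  by (induction n) (auto simp: PhiP_def)

lemma kill_P: "(PhiP ^^ Suc n) (xg n) = \<one>\<^bsub>PG\<^esub>"
proof (rule ext)
  fix m
  show "(PhiP ^^ Suc n) (xg n) m = \<one>\<^bsub>PG\<^esub> m"
    using lampl.kill[OF lampl_sym[of m], of n]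
    by (simp only: PhiP_pow xg_comp group.PhiW_pow[OF sym_group_is_group] oneP W_one)
qed

lemma nonkill_P: "(PhiP ^^ n) (xg n) \<noteq> \<one>\<^bsub>PG\<^esub>"
proof
  assume eq: "(PhiP ^^ n) (xg n) = \<one>\<^bsub>PG\<^esub>"
  let ?m = "Suc n"
  have "(PhiP ^^ n) (xg n) ?m = \<one>\<^bsub>Wm ?m\<^esub>" using eq by (simp add: oneP)
  then have "(Phi (Gm ?m) (rot ?m) (sw ?m 0) ^^ n) (Qop (Gm ?m) (sw ?m n) (\<lambda>h. h = \<one>\<^bsub>Gm ?m\<^esub>)) = (\<lambda>h. False)"
    by (simp only: PhiP_pow xg_comp group.PhiW_pow[OF sym_group_is_group] W_one prod.inject)
  then have "Qop (Gm ?m) (sw ?m 0) ((Phi (Gm ?m) (rot ?m) (sw ?m 0) ^^ n) (\<lambda>h. h = id)) = (\<lambda>h. False)"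
    using lampl.shift[OF lampl_sym[of ?m], of n "\<lambda>h. h = \<one>\<^bsub>Gm ?m\<^esub>"] by (simp add: sym_group_one)
  then show False using nontriv[of n ?m] by simp
qed



definition "encG = to_nat_on CG"
definition "decG = from_nat_into CG"
definition GN :: "nat monoid" where
  "GN = \<lparr>carrier = encG ` CG, monoid.mult = (\<lambda>x y. encG (decG x \<otimes>\<^bsub>PG\<^esub> decG y)), one = encG \<one>\<^bsub>PG\<^esub>\<rparr>"
definition "PhiN x = encG (PhiP (decG x))"

lemma cntC: "countable CG"
  unfolding CG_def by (rule group.countable_generate[OF grpP S_sub]) (simp add: Sg_def)

lemma de: "c \<in> CG \<Longrightarrow> decG (encG c) = c"
  by (simp add: decG_def encG_def cntC)

lemma injE: "inj_on encG CG"
  unfolding encG_def using cntC by blast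

lemma GN_carrier: "carrier GN = encG ` CG" by (simp add: GN_def)
lemma GN_mult: "x \<otimes>\<^bsub>GN\<^esub> y = encG (decG x \<otimes>\<^bsub>PG\<^esub> decG y)" by (simp add: GN_def)
lemma GN_one: "\<one>\<^bsub>GN\<^esub> = encG \<one>\<^bsub>PG\<^esub>" by (simp add: GN_def)

lemma C_one: "\<one>\<^bsub>PG\<^esub> \<in> CG" using subgrpC by (rule subgroup.one_closed)
lemma C_mult: "x \<in> CG \<Longrightarrow> y \<in> CG \<Longrightarrow> x \<otimes>\<^bsub>PG\<^esub> y \<in> CG" using subgrpC by (rule subgroup.m_closed)
lemma C_inv: "x \<in> CG \<Longrightarrow> inv\<^bsub>PG\<^esub> x \<in> CG" using subgrpC by (rule subgroup.m_inv_closed)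
lemma C_car: "x \<in> CG \<Longrightarrow> x \<in> carrier PG" using subgrpC by (rule subgroup.mem_carrier)

lemma enc_mult: "c \<in> CG \<Longrightarrow> d \<in> CG \<Longrightarrow> encG c \<otimes>\<^bsub>GN\<^esub> encG d = encG (c \<otimes>\<^bsub>PG\<^esub> d)"
  by (simp add: GN_mult de)

lemma grpN: "group GN"
proof (rule groupI)
  fix x y assume "x \<in> carrier GN" "y \<in> carrier GN"
  then show "x \<otimes>\<^bsub>GN\<^esub> y \<in> carrier GN" by (auto simp: GN_carrier enc_mult C_mult)
next
  show "\<one>\<^bsub>GN\<^esub> \<in> carrier GN" by (simp add: GN_carrier GN_one C_one)
next
  fix x y z assume "x \<in> carrier GN" "y \<in> carrier GN" "z \<in> carrier GN"
  then show "x \<otimes>\<^bsub>GN\<^esub> y \<otimes>\<^bsub>GN\<^esub> z = x \<otimes>\<^bsub>GN\<^esub> (y \<otimes>\<^bsub>GN\<^esub> z)"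
    by (auto simp: GN_carrier enc_mult C_mult group.is_monoid[OF grpP] monoid.m_assoc C_car)
next
  fix x assume "x \<in> carrier GN"
  then show "\<one>\<^bsub>GN\<^esub> \<otimes>\<^bsub>GN\<^esub> x = x"
    by (auto simp: GN_carrier GN_one enc_mult C_one group.is_monoid[OF grpP] monoid.l_one C_car)
next
  fix x assume "x \<in> carrier GN"
  then obtain c where c: "c \<in> CG" "x = encG c" by (auto simp: GN_carrier)
  show "\<exists>y\<in>carrier GN. y \<otimes>\<^bsub>GN\<^esub> x = \<one>\<^bsub>GN\<^esub>"
    using c by (intro bexI[of _ "encG (inv\<^bsub>PG\<^esub> c)"])
      (auto simp: GN_carrier GN_one enc_mult C_inv group.l_inv[OF grpP] C_car)
qed

lemma enc_inv: "c \<in> CG \<Longrightarrow> inv\<^bsub>GN\<^esub> (encG c) = encG (inv\<^bsub>PG\<^esub> c)"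
  by (rule group.inv_equality[OF grpN])
     (auto simp: GN_carrier GN_one enc_mult C_inv group.l_inv[OF grpP] C_car)

lemma fgN: "finitely_generated_group GN"
  unfolding finitely_generated_group_def
proof (intro exI conjI)
  have SC: "Sg \<subseteq> CG" by (auto simp: CG_def generate.incl)
  show "finite (encG ` Sg)" by (simp add: Sg_def)
  show sub: "encG ` Sg \<subseteq> carrier GN" using SC by (auto simp: GN_carrier)
  show "generate GN (encG ` Sg) = carrier GN"
  proof
    show "generate GN (encG ` Sg) \<subseteq> carrier GN" by (rule group.generate_incl[OF grpN sub])
    show "carrier GN \<subseteq> generate GN (encG ` Sg)"
    proof
      fix x assume "x \<in> carrier GN"
      then obtain c where c: "c \<in> CG" "x = encG c" by (auto simp: GN_carrier)
      have "encG c \<in> generate GN (encG ` Sg)" using c(1) unfolding CG_def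
      proof (induction rule: generate.induct)
        case one then show ?case using generate.one[of GN] by (simp add: GN_one)
      next
        case (incl h) then show ?case by (simp add: generate.incl)
      next
        case (inv h)
        then have "h \<in> CG" using SC by auto
        then show ?case using inv by (simp add: enc_inv[symmetric] generate.inv)
      next
        case (eng h1 h2)
        then show ?case using enc_mult[of h1 h2] generate.eng[OF eng(3,4)] by (simp add: CG_def)
      qed
      then show "x \<in> generate GN (encG ` Sg)" using c by simp
    qed
  qed
qed

lemma rfN: "residually_finite GN"
proof (rule rf_crit[OF grpN])
  fix g assume g: "g \<in> carrier GN" "g \<noteq> \<one>\<^bsub>GN\<^esub>"
  then obtain c where c: "c \<in> CG" "g = encG c" by (auto simp: GN_carrier)
  then have "c \<noteq> \<one>\<^bsub>PG\<^esub>" using g by (auto simp: GN_one)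
  then obtain m where m: "c m \<noteq> \<one>\<^bsub>Wm m\<^esub>" by (auto simp: oneP)
  have hom: "(\<lambda>x. decG x m) \<in> hom GN (Wm m)"
  proof (rule homI)
    fix x assume "x \<in> carrier GN"
    then show "decG x m \<in> carrier (Wm m)" using C_car carrierP by (auto simp: GN_carrier de)
  next
    fix x y assume "x \<in> carrier GN" "y \<in> carrier GN"
    then show "decG (x \<otimes>\<^bsub>GN\<^esub> y) m = decG x m \<otimes>\<^bsub>Wm m\<^esub> decG y m"
      by (auto simp: GN_carrier enc_mult de C_mult multP)
  qed
  have fin: "finite (carrier (Wm m))"
    by (rule group.W_finite[OF sym_group_is_group]) (simp add: sym_group_def finite_permutations)
  show "\<exists>(K :: (((nat \<Rightarrow> nat) \<Rightarrow> bool) \<times> (nat \<Rightarrow> nat)) monoid) \<psi>. group K \<and> finite (carrier K) \<and> \<psi> \<in> hom GN K \<and> \<psi> g \<noteq> \<one>\<^bsub>K\<^esub>"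
    using hom m c grpW fin
    by (intro exI[of _ "Wm m"] exI[of _ "\<lambda>x. decG x m"]) (auto simp: de)
qed

lemma PhiN_hom: "PhiN \<in> hom GN GN"
proof (rule homI)
  fix x assume "x \<in> carrier GN"
  then show "PhiN x \<in> carrier GN" by (auto simp: GN_carrier PhiN_def de PhiP_C)
next
  fix x y assume "x \<in> carrier GN" "y \<in> carrier GN"
  then obtain c d where cd: "c \<in> CG" "d \<in> CG" "x = encG c" "y = encG d" by (auto simp: GN_carrier)
  have "PhiP (c \<otimes>\<^bsub>PG\<^esub> d) = PhiP c \<otimes>\<^bsub>PG\<^esub> PhiP d" using PhiP_hom cd C_car by (simp add: hom_mult)
  then show "PhiN (x \<otimes>\<^bsub>GN\<^esub> y) = PhiN x \<otimes>\<^bsub>GN\<^esub> PhiN y"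
    using cd by (simp add: PhiN_def enc_mult de C_mult PhiP_C)
qed

lemma PhiN_pow: "c \<in> CG \<Longrightarrow> (PhiN ^^ n) (encG c) = encG ((PhiP ^^ n) c) \<and> (PhiP ^^ n) c \<in> CG"
  by (induction n) (auto simp: PhiN_def de PhiP_C)

lemma PhiP_one: "(PhiP ^^ n) \<one>\<^bsub>PG\<^esub> = \<one>\<^bsub>PG\<^esub>"
proof (induction n)
  case 0 then show ?case by simp
next
  case (Suc n)
  have "PhiP \<one>\<^bsub>PG\<^esub> = \<one>\<^bsub>PG\<^esub>" using PhiP_hom grpP by (simp add: hom_one)
  then show ?case using Suc by simp
qed

lemma noninj: "\<not> inj_on PhiN ((PhiN ^^ n) ` carrier GN)"
proof
  assume inj: "inj_on PhiN ((PhiN ^^ n) ` carrier GN)"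
  let ?u = "encG ((PhiP ^^ n) (xg n))"
  let ?v = "encG ((PhiP ^^ n) \<one>\<^bsub>PG\<^esub>)"
  have u: "?u \<in> (PhiN ^^ n) ` carrier GN"
    using PhiN_pow[OF xg_in[of n], of n] xg_in[of n]
    by (intro image_eqI[of _ _ "encG (xg n)"]) (auto simp: GN_carrier)
  have v: "?v \<in> (PhiN ^^ n) ` carrier GN"
    using PhiN_pow[OF C_one, of n] C_one
    by (intro image_eqI[of _ _ "encG \<one>\<^bsub>PG\<^esub>"]) (auto simp: GN_carrier)
  have uC: "(PhiP ^^ n) (xg n) \<in> CG" using PhiN_pow[OF xg_in] by blast
  have vC: "(PhiP ^^ n) \<one>\<^bsub>PG\<^esub> \<in> CG" using PhiN_pow[OF C_one] by blast
  have "PhiN ?u = encG ((PhiP ^^ Suc n) (xg n))" using uC by (simp add: PhiN_def de)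
  also have "\<dots> = encG \<one>\<^bsub>PG\<^esub>" by (simp only: kill_P)
  also have "\<dots> = PhiN ?v" using vC by (simp add: PhiN_def de PhiP_one PhiP_one[of 1, simplified])
  finally have "?u = ?v" using inj u v by (meson inj_onD)
  then have "(PhiP ^^ n) (xg n) = (PhiP ^^ n) \<one>\<^bsub>PG\<^esub>" using injE uC vC by (meson inj_onD)
  then show False using nonkill_P PhiP_one by simp
qed

theorem theorem2:
  shows "\<exists>(G :: nat monoid) (\<Phi> :: nat \<Rightarrow> nat).
           group G \<and> finitely_generated_group G \<and> residually_finite G \<and>
           \<Phi> \<in> hom G G \<and>
           (\<forall>n::nat. \<not> inj_on \<Phi> ((\<Phi> ^^ n) ` carrier G))"
  using grpN fgN rfN PhiN_hom noninj by blast


end
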